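(* Let $N\ge 2$ and consider the slotted-ALOHA game among $N$ players in which player $i$ chooses $q_i\in(0,1)$ and has net utility $$V_i(\underline{q})=C\log\gamma_i(\underline{q})+A\,\alpha_i(\underline{q}_{-i})\,\overline{\gamma}_{-i}(\underline{q})-M q_i,$$ where $\gamma_i(\underline{q})=q_i\prod_{j\ne i}(1-q_j)$, $\alpha_i(\underline{q}_{-i})=\prod_{j\ne i}(1-q_j)$, $\overline{\gamma}_{-i}(\underline{q})=\frac{1}{N-1}\sum_{j\ne i}\gamma_j(\underline{q})$, and all players have the same parameters $C,M>0$, $A\ge 0$. Let $q^*\underline{1}$, $0<q^*<1$, be a symmetric Nash equilibrium of this game. If $$C>2(N-1)A,$$ then $q^*\underline{1}$ is a locally asymptotically stable equilibrium of the continuous-time dynamics $$\dot q_i(t)=\frac{\partial V_i}{\partial q_i}(\underline{q}(t)),\qquad i=1,\dots,N.$$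
   Context: $\underline{q}=(q_1,\dots,q_N)$ is the profile of access probabilities and $\underline{q}_{-i}$ the profile of players other than $i$; $\underline{1}$ is the all-ones vector in $\mathbb{R}^N$. A Nash equilibrium is a profile $\underline{q}^*$ such that for each $i$, $q_i^*$ maximizes $V_i(q_i;\underline{q}^*_{-i})$ over $q_i$; it is symmetric if all coordinates are equal. *)

theory Defs
  imports "HOL-Analysis.Analysis"
begin

text \<open>Players are indexed by a finite type 'n, N = CARD('n). A profile is q :: real^'n.\<close>

definition upd :: "real^'n \<Rightarrow> 'n \<Rightarrow> real \<Rightarrow> real^'n" where
  "upd q i x = (\<chi> j. if j = i then x else q $ j)"

definition alpha :: "real^'n \<Rightarrow> 'n \<Rightarrow> real" where
  "alpha q i = (\<Prod>j\<in>UNIV - {i}. 1 - q $ j)"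

definition gamma :: "real^'n \<Rightarrow> 'n \<Rightarrow> real" where
  "gamma q i = q $ i * (\<Prod>j\<in>UNIV - {i}. 1 - q $ j)"

definition gamma_bar :: "real^'n \<Rightarrow> 'n \<Rightarrow> real" where
  "gamma_bar q i = (1 / (real CARD('n) - 1)) * (\<Sum>j\<in>UNIV - {i}. gamma q j)"

definition V :: "real \<Rightarrow> real \<Rightarrow> real \<Rightarrow> real^'n \<Rightarrow> 'n \<Rightarrow> real" where
  "V C A M q i = C * ln (gamma q i) + A * alpha q i * gamma_bar q i - M * q $ i"

definition nash :: "real \<Rightarrow> real \<Rightarrow> real \<Rightarrow> real^'n \<Rightarrow> bool" where
  "nash C A M q \<longleftrightarrow> (\<forall>i. 0 < q $ i \<and> q $ i < 1) \<and>
     (\<forall>i x. 0 < x \<and> x < 1 \<longrightarrow> V C A M (upd q i x) i \<le> V C A M q i)"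

definition field :: "real \<Rightarrow> real \<Rightarrow> real \<Rightarrow> real^'n \<Rightarrow> real^'n" where
  "field C A M q = (\<chi> i. deriv (\<lambda>x. V C A M (upd q i x) i) (q $ i))"

definition is_solution :: "(real^'n \<Rightarrow> real^'n) \<Rightarrow> (real \<Rightarrow> real^'n) \<Rightarrow> bool" where
  "is_solution F x \<longleftrightarrow> (\<forall>t\<ge>0. (x has_vector_derivative F (x t)) (at t within {0..}))"

definition loc_asym_stable :: "(real^'n \<Rightarrow> real^'n) \<Rightarrow> real^'n \<Rightarrow> bool" where
  "loc_asym_stable F p \<longleftrightarrow> F p = 0 \<and>
     (\<forall>\<epsilon>>0. \<exists>\<delta>>0. \<forall>x. is_solution F x \<and> dist (x 0) p < \<delta> \<longrightarrow> (\<forall>t\<ge>0. dist (x t) p < \<epsilon>)) \<and>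
     (\<exists>\<delta>>0. (\<forall>y. dist y p < \<delta> \<longrightarrow> (\<exists>x. is_solution F x \<and> x 0 = y)) \<and>
        (\<forall>x. is_solution F x \<and> dist (x 0) p < \<delta> \<longrightarrow> (x \<longlongrightarrow> p) at_top))"

end

theory Submission
  imports Defs "HOL-Analysis.Analysis"
begin


lemma prod_diff_le:
  fixes a b :: "'i \<Rightarrow> real"
  assumes "finite S" "\<And>k. k \<in> S \<Longrightarrow> 0 \<le> a k \<and> a k \<le> 1 \<and> 0 \<le> b k \<and> b k \<le> 1"
  shows "\<bar>prod a S - prod b S\<bar> \<le> (\<Sum>k\<in>S. \<bar>a k - b k\<bar>)"
  using assms
proof (induction S rule: finite_induct)
  case empty then show ?case by simp
next
  case (insert x F)
  have h: "\<And>k. k \<in> F \<Longrightarrow> 0 \<le> a k \<and> a k \<le> 1 \<and> 0 \<le> b k \<and> b k \<le> 1"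
    using insert.prems by auto
  have IH: "\<bar>prod a F - prod b F\<bar> \<le> (\<Sum>k\<in>F. \<bar>a k - b k\<bar>)" using insert.IH h by blast
  have P: "0 \<le> prod a F" "prod a F \<le> 1" using h by (auto intro: prod_nonneg prod_le_1)
  have x: "0 \<le> a x" "a x \<le> 1" "0 \<le> b x" "b x \<le> 1" using insert.prems by auto
  have "prod a (insert x F) - prod b (insert x F) = (a x - b x) * prod a F + b x * (prod a F - prod b F)"
    using insert.hyps by (simp add: algebra_simps)
  also have "\<bar>\<dots>\<bar> \<le> \<bar>a x - b x\<bar> * prod a F + b x * \<bar>prod a F - prod b F\<bar>"
  proof -
    have "\<bar>(a x - b x) * prod a F\<bar> = \<bar>a x - b x\<bar> * prod a F" using P by (simp add: abs_mult)
    moreover have "\<bar>b x * (prod a F - prod b F)\<bar> = b x * \<bar>prod a F - prod b F\<bar>" using x by (simp add: abs_mult)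
    ultimately show ?thesis by (metis abs_triangle_ineq)
  qed
  also have "\<dots> \<le> \<bar>a x - b x\<bar> + \<bar>prod a F - prod b F\<bar>"
  proof -
    have "\<bar>a x - b x\<bar> * prod a F \<le> \<bar>a x - b x\<bar>" using P by (simp add: mult_left_le)
    moreover have "b x * \<bar>prod a F - prod b F\<bar> \<le> \<bar>prod a F - prod b F\<bar>" using x by (simp add: mult_left_le_one_le)
    ultimately show ?thesis by linarith
  qed
  also have "\<dots> \<le> \<bar>a x - b x\<bar> + (\<Sum>k\<in>F. \<bar>a k - b k\<bar>)" using IH by simp
  finally show ?case using insert.hyps by simp
qed




definition Sm :: "real^'n \<Rightarrow> 'n \<Rightarrow> real" where
  "Sm q i = (\<Sum>j\<in>UNIV-{i}. q$j * (\<Prod>k\<in>UNIV-{j}-{i}. 1 - q$k))"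

definition Fx :: "real \<Rightarrow> real \<Rightarrow> real \<Rightarrow> real^'n \<Rightarrow> real^'n" where
  "Fx C A M q = (\<chi> i. C / q$i - A / (real CARD('n) - 1) * (alpha q i * Sm q i) - M)"

lemma alpha_upd: "alpha (upd q i x) i = alpha q i"
  unfolding alpha_def upd_def by (intro prod.cong) auto

lemma gamma_upd_other:
  assumes "j \<noteq> i"
  shows "gamma (upd q i x) j = q$j * ((1 - x) * (\<Prod>k\<in>UNIV-{j}-{i}. 1 - q$k))"
proof -
  have "(\<Prod>k\<in>UNIV-{j}. 1 - upd q i x $ k) = (1 - upd q i x $ i) * (\<Prod>k\<in>UNIV-{j}-{i}. 1 - upd q i x $ k)"
    using assms by (intro prod.remove) auto
  also have "(\<Prod>k\<in>UNIV-{j}-{i}. 1 - upd q i x $ k) = (\<Prod>k\<in>UNIV-{j}-{i}. 1 - q $ k)"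
    by (intro prod.cong) (auto simp: upd_def)
  finally show ?thesis using assms unfolding gamma_def by (simp add: upd_def)
qed

lemma V_upd:
  fixes q :: "real^'n"
  shows "V C A M (upd q i x) i = C * ln (x * alpha q i) + A * alpha q i * (1 / (real CARD('n) - 1) * ((1 - x) * Sm q i)) - M * x"
proof -
  have g: "gamma (upd q i x) i = x * alpha q i"
    using alpha_upd[of q i x] unfolding gamma_def alpha_def by (simp add: upd_def)
  have s: "(\<Sum>j\<in>UNIV-{i}. gamma (upd q i x) j) = (1 - x) * Sm q i"
    unfolding Sm_def sum_distrib_left
    by (intro sum.cong) (auto simp: gamma_upd_other)
  show ?thesis unfolding V_def gamma_bar_def g s alpha_upd by (simp add: upd_def)
qed

lemma V_upd_deriv:
  fixes q :: "real^'n"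
  assumes "0 < x" "0 < alpha q i"
  shows "((\<lambda>x. V C A M (upd q i x) i) has_real_derivative
           (C / x - A / (real CARD('n) - 1) * (alpha q i * Sm q i) - M)) (at x)"
proof -
  define K where "K = 1 / (real CARD('n) - 1)"
  have "((\<lambda>x. C * ln (x * alpha q i) + A * alpha q i * (K * ((1 - x) * Sm q i)) - M * x)
     has_real_derivative (C * (alpha q i / (x * alpha q i)) + A * alpha q i * (K * ((0 - 1) * Sm q i)) - M * 1)) (at x)"
    using assms by (auto intro!: derivative_eq_intros)
  moreover have "C * (alpha q i / (x * alpha q i)) + A * alpha q i * (K * ((0 - 1) * Sm q i)) - M * 1
     = C / x - A / (real CARD('n) - 1) * (alpha q i * Sm q i) - M"
  proof -
    have "alpha q i / (x * alpha q i) = 1 / x" using assms by simp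
    then show ?thesis unfolding K_def by (simp add: algebra_simps)
  qed
  ultimately show ?thesis unfolding V_upd K_def[symmetric] by simp
qed

lemma alpha_pos: "(\<And>j. q$j < 1) \<Longrightarrow> 0 < alpha q i"
  unfolding alpha_def by (intro prod_pos) auto

lemma field_eq:
  fixes q :: "real^'n"
  assumes "\<And>j. 0 < q$j \<and> q$j < 1"
  shows "field C A M q = Fx C A M q"
  unfolding field_def Fx_def
  using assms by (intro vec_eq_iff[THEN iffD2] allI) (simp add: DERIV_imp_deriv[OF V_upd_deriv] alpha_pos)




lemma card_minus_one: "real (card (UNIV - {i::'n::finite})) = real CARD('n) - 1"
proof -
  have "card (UNIV - {i}) = CARD('n) - 1" by (simp add: card_Diff_singleton)
  moreover have "CARD('n) \<ge> 1" by (simp add: Suc_leI)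
  ultimately show ?thesis by (simp add: of_nat_diff)
qed

lemma mult_diff_le:
  fixes a b a' b' :: real
  shows "\<bar>a * b - a' * b'\<bar> \<le> \<bar>a - a'\<bar> * \<bar>b\<bar> + \<bar>a'\<bar> * \<bar>b - b'\<bar>"
proof -
  have "a * b - a' * b' = (a - a') * b + a' * (b - b')" by (simp add: algebra_simps)
  then show ?thesis by (metis abs_mult abs_triangle_ineq)
qed

lemma G_diff:
  fixes q q' :: "real^'n"
  assumes "\<And>k. 0 \<le> q$k \<and> q$k \<le> 1" "\<And>k. 0 \<le> q'$k \<and> q'$k \<le> 1"
  shows "\<bar>alpha q i * Sm q i - alpha q' i * Sm q' i\<bar>
         \<le> 2 * (real CARD('n) - 1) * (\<Sum>k\<in>UNIV-{i}. \<bar>q$k - q'$k\<bar>)"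
proof -
  define s where "s = (\<Sum>k\<in>UNIV-{i}. \<bar>q$k - q'$k\<bar>)"
  have s0: "0 \<le> s" unfolding s_def by (simp add: sum_nonneg)
  have ad: "\<bar>alpha q i - alpha q' i\<bar> \<le> s"
    unfolding alpha_def s_def
  proof -
    have "\<bar>(\<Prod>k\<in>UNIV - {i}. 1 - q $ k) - (\<Prod>k\<in>UNIV - {i}. 1 - q' $ k)\<bar> \<le> (\<Sum>k\<in>UNIV - {i}. \<bar>(1 - q$k) - (1 - q'$k)\<bar>)"
      by (rule prod_diff_le) (use assms in auto)
    also have "\<dots> = (\<Sum>k\<in>UNIV - {i}. \<bar>q $ k - q' $ k\<bar>)"
      by (intro sum.cong refl) linarith
    finally show "\<bar>(\<Prod>k\<in>UNIV - {i}. 1 - q $ k) - (\<Prod>k\<in>UNIV - {i}. 1 - q' $ k)\<bar> \<le> (\<Sum>k\<in>UNIV - {i}. \<bar>q $ k - q' $ k\<bar>)" .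
  qed
  have a1: "0 \<le> alpha q' i" "alpha q' i \<le> 1" unfolding alpha_def using assms
    by (auto intro: prod_nonneg prod_le_1)
  have Pb: "\<And>q::real^'n. (\<And>k. 0 \<le> q$k \<and> q$k \<le> 1) \<Longrightarrow> 0 \<le> (\<Prod>k\<in>UNIV-{j}-{i}. 1 - q$k) \<and> (\<Prod>k\<in>UNIV-{j}-{i}. 1 - q$k) \<le> 1" for j
    by (auto intro: prod_nonneg prod_le_1)
  have Sb: "0 \<le> Sm q i \<and> Sm q i \<le> real CARD('n) - 1"
  proof -
    have t: "\<And>j. 0 \<le> q$j * (\<Prod>k\<in>UNIV-{j}-{i}. 1 - q$k) \<and> q$j * (\<Prod>k\<in>UNIV-{j}-{i}. 1 - q$k) \<le> 1"
      using assms(1) Pb[of q] by (meson mult_le_one mult_nonneg_nonneg)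
    have "Sm q i \<le> real (card (UNIV - {i})) * 1"
      unfolding Sm_def by (rule sum_bounded_above) (use t in auto)
    moreover have "0 \<le> Sm q i" unfolding Sm_def using t by (simp add: sum_nonneg)
    ultimately show ?thesis using card_minus_one[of i] by simp
  qed
  have termb: "\<bar>q$j * (\<Prod>k\<in>UNIV-{j}-{i}. 1 - q$k) - q'$j * (\<Prod>k\<in>UNIV-{j}-{i}. 1 - q'$k)\<bar> \<le> s"
    if j: "j \<in> UNIV - {i}" for j
  proof -
    have pd: "\<bar>(\<Prod>k\<in>UNIV-{j}-{i}. 1 - q$k) - (\<Prod>k\<in>UNIV-{j}-{i}. 1 - q'$k)\<bar> \<le> (\<Sum>k\<in>UNIV-{j}-{i}. \<bar>q$k - q'$k\<bar>)"
    proof -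
      have "\<bar>(\<Prod>k\<in>UNIV-{j}-{i}. 1 - q$k) - (\<Prod>k\<in>UNIV-{j}-{i}. 1 - q'$k)\<bar> \<le> (\<Sum>k\<in>UNIV-{j}-{i}. \<bar>(1 - q$k) - (1 - q'$k)\<bar>)"
        by (rule prod_diff_le) (use assms in auto)
      also have "\<dots> = (\<Sum>k\<in>UNIV-{j}-{i}. \<bar>q $ k - q' $ k\<bar>)"
        by (intro sum.cong refl) linarith
      finally show ?thesis .
    qed
    have "\<bar>q$j * (\<Prod>k\<in>UNIV-{j}-{i}. 1 - q$k) - q'$j * (\<Prod>k\<in>UNIV-{j}-{i}. 1 - q'$k)\<bar>
        \<le> \<bar>q$j - q'$j\<bar> * \<bar>\<Prod>k\<in>UNIV-{j}-{i}. 1 - q$k\<bar> + \<bar>q'$j\<bar> * \<bar>(\<Prod>k\<in>UNIV-{j}-{i}. 1 - q$k) - (\<Prod>k\<in>UNIV-{j}-{i}. 1 - q'$k)\<bar>"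
      by (rule mult_diff_le)
    also have "\<dots> \<le> \<bar>q$j - q'$j\<bar> + \<bar>(\<Prod>k\<in>UNIV-{j}-{i}. 1 - q$k) - (\<Prod>k\<in>UNIV-{j}-{i}. 1 - q'$k)\<bar>"
    proof -
      have "\<bar>q$j - q'$j\<bar> * \<bar>\<Prod>k\<in>UNIV-{j}-{i}. 1 - q$k\<bar> \<le> \<bar>q$j - q'$j\<bar>"
        using Pb[of q j] assms(1) by (simp add: mult_left_le)
      moreover have "\<bar>q'$j\<bar> * \<bar>(\<Prod>k\<in>UNIV-{j}-{i}. 1 - q$k) - (\<Prod>k\<in>UNIV-{j}-{i}. 1 - q'$k)\<bar>
           \<le> \<bar>(\<Prod>k\<in>UNIV-{j}-{i}. 1 - q$k) - (\<Prod>k\<in>UNIV-{j}-{i}. 1 - q'$k)\<bar>"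
        using assms(2)[of j] by (simp add: mult_left_le_one_le)
      ultimately show ?thesis by linarith
    qed
    also have "\<dots> \<le> \<bar>q$j - q'$j\<bar> + (\<Sum>k\<in>UNIV-{j}-{i}. \<bar>q$k - q'$k\<bar>)" using pd by simp
    also have "\<dots> = s"
    proof -
      have eq: "UNIV-{j}-{i} = UNIV-{i}-{j}" by auto
      show ?thesis unfolding s_def eq using j by (simp add: sum.remove[of "UNIV-{i}" j])
    qed
    finally show ?thesis .
  qed
  have Sd: "\<bar>Sm q i - Sm q' i\<bar> \<le> (real CARD('n) - 1) * s"
  proof -
    have "\<bar>Sm q i - Sm q' i\<bar> \<le> (\<Sum>j\<in>UNIV-{i}. \<bar>q$j * (\<Prod>k\<in>UNIV-{j}-{i}. 1 - q$k) - q'$j * (\<Prod>k\<in>UNIV-{j}-{i}. 1 - q'$k)\<bar>)"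
      unfolding Sm_def sum_subtractf[symmetric] by (rule sum_abs)
    also have "\<dots> \<le> real (card (UNIV - {i})) * s"
      by (rule sum_bounded_above) (use termb in auto)
    finally show ?thesis using card_minus_one[of i] by simp
  qed
  have "\<bar>alpha q i * Sm q i - alpha q' i * Sm q' i\<bar>
     \<le> \<bar>alpha q i - alpha q' i\<bar> * \<bar>Sm q i\<bar> + \<bar>alpha q' i\<bar> * \<bar>Sm q i - Sm q' i\<bar>"
    by (rule mult_diff_le)
  also have "\<dots> \<le> s * (real CARD('n) - 1) + 1 * ((real CARD('n) - 1) * s)"
    apply (rule add_mono)
     apply (rule mult_mono) using ad Sb s0 apply auto[4]
    apply (rule mult_mono) using a1 Sd apply auto
    done
  finally show ?thesis unfolding s_def by (simp add: algebra_simps)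
qed

lemma cross_le:
  fixes u :: "'n::finite \<Rightarrow> real"
  shows "(\<Sum>i\<in>UNIV. \<bar>u i\<bar> * (\<Sum>k\<in>UNIV-{i}. \<bar>u k\<bar>)) \<le> (real CARD('n) - 1) * (\<Sum>i\<in>UNIV. (u i)^2)"
proof -
  define Q where "Q = (\<Sum>i\<in>UNIV. (u i)^2)"
  have rem: "(\<Sum>k\<in>UNIV-{i}. (u k)^2) = Q - (u i)^2" for i
    unfolding Q_def by (simp add: sum.remove[of UNIV i])
  have "(\<Sum>i\<in>UNIV. \<bar>u i\<bar> * (\<Sum>k\<in>UNIV-{i}. \<bar>u k\<bar>)) = (\<Sum>i\<in>UNIV. \<Sum>k\<in>UNIV-{i}. \<bar>u i\<bar> * \<bar>u k\<bar>)"
    by (simp add: sum_distrib_left)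
  also have "\<dots> \<le> (\<Sum>i\<in>UNIV. \<Sum>k\<in>UNIV-{i}. ((u i)^2 + (u k)^2) / 2)"
  proof (intro sum_mono)
    fix i k
    have "0 \<le> (\<bar>u i\<bar> - \<bar>u k\<bar>)^2" by simp
    then show "\<bar>u i\<bar> * \<bar>u k\<bar> \<le> ((u i)^2 + (u k)^2) / 2" by (simp add: power2_eq_square algebra_simps)
  qed
  also have "\<dots> = (\<Sum>i\<in>UNIV. ((real CARD('n) - 1) * (u i)^2 + (Q - (u i)^2)) / 2)"
    by (intro sum.cong refl) (simp add: sum_divide_distrib[symmetric] sum.distrib rem card_minus_one)
  also have "\<dots> = ((real CARD('n) - 1) * Q + (real CARD('n) * Q - Q)) / 2"
    by (simp add: sum_divide_distrib[symmetric] sum.distrib sum_subtractf sum_distrib_left[symmetric] Q_def)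
  also have "\<dots> = (real CARD('n) - 1) * Q"
    by (simp add: field_simps)
  finally show ?thesis unfolding Q_def .
qed




lemma term_bd:
  fixes a b G1 G2 C A N s M :: real
  assumes "0 < a" "a < 1" "0 < b" "b < 1" "C > 0" "A \<ge> 0" "N > 1"
    "\<bar>G1 - G2\<bar> \<le> 2 * (N - 1) * s"
  shows "(a - b) * ((C / a - A / (N - 1) * G1 - M) - (C / b - A / (N - 1) * G2 - M))
         \<le> - C * (a - b)^2 + 2 * A * \<bar>a - b\<bar> * s"
proof -
  have p1: "(a - b) * (C / a - C / b) \<le> - C * (a - b)^2"
  proof -
    have e: "(a - b) * (C / a - C / b) = - C * ((a - b)^2 / (a * b))"
      using assms by (simp add: field_simps power2_eq_square)
    have ab: "0 < a * b" "a * b \<le> 1" using assms by (auto simp: mult_le_one)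
    have "(a - b)^2 \<le> (a - b)^2 / (a * b)"
      using ab by (simp add: le_divide_eq mult_left_le)
    from mult_left_mono[OF this, of C] show ?thesis unfolding e using assms by simp
  qed
  have p2: "- ((a - b) * (A / (N - 1) * (G1 - G2))) \<le> 2 * A * \<bar>a - b\<bar> * s"
  proof -
    have K: "A / (N - 1) \<ge> 0" using assms by simp
    have "- ((a - b) * (A / (N - 1) * (G1 - G2))) \<le> \<bar>(a - b) * (A / (N - 1) * (G1 - G2))\<bar>"
      by (rule abs_ge_minus_self)
    also have "\<dots> = \<bar>a - b\<bar> * (A / (N - 1)) * \<bar>G1 - G2\<bar>" using K assms by (simp add: abs_mult)
    also have "\<dots> \<le> \<bar>a - b\<bar> * (A / (N - 1)) * (2 * (N - 1) * s)"
      using assms by (intro mult_left_mono) auto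
    also have "\<dots> = 2 * A * \<bar>a - b\<bar> * s" using assms by (simp add: field_simps)
    finally show ?thesis .
  qed
  have "(a - b) * ((C / a - A / (N - 1) * G1 - M) - (C / b - A / (N - 1) * G2 - M))
     = (a - b) * (C / a - C / b) + - ((a - b) * (A / (N - 1) * (G1 - G2)))"
  proof -
    have "(a - b) * ((C / a - K * G1 - M) - (C / b - K * G2 - M))
     = (a - b) * (C / a - C / b) + - ((a - b) * (K * (G1 - G2)))" for K :: real
      by (simp add: algebra_simps)
    then show ?thesis .
  qed
  then show ?thesis using p1 p2 by linarith
qed

lemma key_ineq:
  fixes p q :: "real^'n"
  assumes card: "CARD('n) \<ge> 2" and C: "C > 0" and A: "A \<ge> 0"
    and p: "\<And>k. 0 < p$k \<and> p$k < 1" and q: "\<And>k. 0 < q$k \<and> q$k < 1"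
    and F0: "Fx C A M p = 0"
  shows "(q - p) \<bullet> Fx C A M q \<le> - (C - 2 * (real CARD('n) - 1) * A) * norm (q - p)^2"
proof -
  define N where "N = real CARD('n)"
  have N1: "N > 1" unfolding N_def using card by simp
  define u where "u k = q$k - p$k" for k
  define s where "s i = (\<Sum>k\<in>UNIV-{i}. \<bar>u k\<bar>)" for i
  have "(q - p) \<bullet> Fx C A M q = (q - p) \<bullet> (Fx C A M q - Fx C A M p)" using F0 by simp
  also have "\<dots> = (\<Sum>i\<in>UNIV. u i * (Fx C A M q $ i - Fx C A M p $ i))"
    unfolding inner_vec_def u_def by simp
  also have "\<dots> \<le> (\<Sum>i\<in>UNIV. - C * (u i)^2 + 2 * A * \<bar>u i\<bar> * s i)"
  proof (intro sum_mono)
    fix i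
    have G: "\<bar>alpha q i * Sm q i - alpha p i * Sm p i\<bar> \<le> 2 * (N - 1) * s i"
      unfolding N_def s_def u_def using G_diff[of q p i] p q by (simp add: less_imp_le)
    show "u i * (Fx C A M q $ i - Fx C A M p $ i) \<le> - C * (u i)^2 + 2 * A * \<bar>u i\<bar> * s i"
      unfolding u_def Fx_def N_def[symmetric] using term_bd[OF _ _ _ _ C A N1 G] p[of i] q[of i] by simp
  qed
  also have "\<dots> = - C * (\<Sum>i\<in>UNIV. (u i)^2) + 2 * A * (\<Sum>i\<in>UNIV. \<bar>u i\<bar> * s i)"
    by (simp only: sum.distrib mult.assoc sum_distrib_left[symmetric])
  also have "\<dots> \<le> - C * (\<Sum>i\<in>UNIV. (u i)^2) + 2 * A * ((N - 1) * (\<Sum>i\<in>UNIV. (u i)^2))"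
    using cross_le[of u] A unfolding s_def N_def by (intro add_left_mono mult_left_mono) auto
  also have "(\<Sum>i\<in>UNIV. (u i)^2) = norm (q - p)^2"
    unfolding power2_norm_eq_inner inner_vec_def u_def by (simp add: power2_eq_square)
  finally show ?thesis unfolding N_def by (simp add: algebra_simps)
qed

lemma upd_same: "upd p i (p$i) = p"
  unfolding upd_def by (simp add: vec_eq_iff)

lemma Fx_zero:
  fixes p :: "real^'n"
  assumes "nash C A M p"
  shows "Fx C A M p = 0"
proof -
  have p: "\<And>k. 0 < p$k \<and> p$k < 1" using assms unfolding nash_def by auto
  show ?thesis
  proof (subst vec_eq_iff, intro allI)
    fix i
    define d where "d = min (p$i) (1 - p$i)"
    have d: "0 < d" unfolding d_def using p[of i] by simp
    have D: "((\<lambda>x. V C A M (upd p i x) i) has_real_derivative Fx C A M p $ i) (at (p$i))"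
      unfolding Fx_def using V_upd_deriv[of "p$i" p i C A M] alpha_pos[of p i] p by simp
    have "\<forall>y. \<bar>p$i - y\<bar> < d \<longrightarrow> V C A M (upd p i y) i \<le> V C A M (upd p i (p$i)) i"
    proof (intro allI impI)
      fix y assume "\<bar>p$i - y\<bar> < d"
      then have "0 < y" "y < 1" unfolding d_def by auto
      then show "V C A M (upd p i y) i \<le> V C A M (upd p i (p$i)) i"
        using assms unfolding nash_def upd_same by blast
    qed
    from DERIV_local_max[OF D d this] show "Fx C A M p $ i = 0 $ i" by simp
  qed
qed

definition clampv :: "real \<Rightarrow> real \<Rightarrow> real^'n \<Rightarrow> real^'n" where
  "clampv lo hi q = (\<chi> i. max lo (min hi (q$i)))"

lemma clamp_comp: "\<bar>max lo (min hi (a::real)) - max lo (min hi b)\<bar> \<le> \<bar>a - b\<bar>"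
  by (simp add: max_def min_def abs_if)

lemma inv_lip: "(lo::real) > 0 \<Longrightarrow> x \<ge> lo \<Longrightarrow> y \<ge> lo \<Longrightarrow> \<bar>C / x - C / y\<bar> \<le> \<bar>C\<bar> / lo^2 * \<bar>x - y\<bar>"
proof -
  assume a: "lo > 0" "x \<ge> lo" "y \<ge> lo"
  have x0: "x > 0" using a by linarith
  have y0: "y > 0" using a by linarith
  note xy = x0 y0
  have "C / x - C / y = C * (y - x) / (x * y)" using xy by (simp add: field_simps)
  moreover have h: "\<bar>y - x\<bar> = \<bar>x - y\<bar>" by linarith
  ultimately have "\<bar>C / x - C / y\<bar> = \<bar>C\<bar> * \<bar>x - y\<bar> / (x * y)" using xy by (simp add: abs_mult)
  also have "\<dots> \<le> \<bar>C\<bar> * \<bar>x - y\<bar> / lo^2"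
    using a by (intro divide_left_mono) (auto simp: power2_eq_square intro: mult_mono)
  finally show ?thesis by simp
qed




lemma clampv_comp: "\<bar>clampv lo hi a $ k - clampv lo hi b $ k\<bar> \<le> norm (a - b)"
proof -
  have "\<bar>clampv lo hi a $ k - clampv lo hi b $ k\<bar> \<le> \<bar>a$k - b$k\<bar>"
    unfolding clampv_def using clamp_comp by simp
  also have "\<dots> \<le> norm (a - b)" using component_le_norm_cart[of "a - b" k] by simp
  finally show ?thesis .
qed

lemma clampv_range: "lo \<le> hi \<Longrightarrow> lo \<le> clampv lo hi a $ k \<and> clampv lo hi a $ k \<le> hi"
  unfolding clampv_def by simp

lemma Fx_clamp_lip:
  fixes lo hi :: real
  assumes lo: "0 < lo" "lo \<le> hi" "hi < 1" and card: "CARD('n) \<ge> 2" and A: "A \<ge> 0"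
  shows "\<exists>L\<ge>0. \<forall>a b::real^'n. norm (Fx C A M (clampv lo hi a) - Fx C A M (clampv lo hi b)) \<le> L * norm (a - b)"
proof -
  define N where "N = real CARD('n)"
  have N1: "N > 1" unfolding N_def using card by simp
  define K where "K = \<bar>C\<bar> / lo^2 + 2 * A * (N - 1)"
  have K0: "K \<ge> 0" unfolding K_def using A N1 by simp
  have comp: "\<bar>Fx C A M (clampv lo hi a) $ i - Fx C A M (clampv lo hi b) $ i\<bar> \<le> K * norm (a - b)"
    for a b :: "real^'n" and i
  proof -
    define ca where "ca = clampv lo hi a"
    define cb where "cb = clampv lo hi b"
    have rca: "\<And>k. lo \<le> ca$k \<and> ca$k \<le> hi" unfolding ca_def using clampv_range lo by blast
    have rcb: "\<And>k. lo \<le> cb$k \<and> cb$k \<le> hi" unfolding cb_def using clampv_range lo by blast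
    have dk: "\<And>k. \<bar>ca$k - cb$k\<bar> \<le> norm (a - b)" unfolding ca_def cb_def by (rule clampv_comp)
    have G: "\<bar>alpha ca i * Sm ca i - alpha cb i * Sm cb i\<bar> \<le> 2 * (N - 1) * (\<Sum>k\<in>UNIV-{i}. \<bar>ca$k - cb$k\<bar>)"
      unfolding N_def
    proof (rule G_diff)
      fix k
      show "0 \<le> ca $ k \<and> ca $ k \<le> 1" using rca[of k] lo by linarith
      show "0 \<le> cb $ k \<and> cb $ k \<le> 1" using rcb[of k] lo by linarith
    qed
    have sk: "(\<Sum>k\<in>UNIV-{i}. \<bar>ca$k - cb$k\<bar>) \<le> (N - 1) * norm (a - b)"
    proof -
      have "(\<Sum>k\<in>UNIV-{i}. \<bar>ca$k - cb$k\<bar>) \<le> real (card (UNIV - {i})) * norm (a - b)"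
        by (rule sum_bounded_above) (use dk in auto)
      then show ?thesis unfolding N_def using card_minus_one[of i] by simp
    qed
    have inv: "\<bar>C / ca$i - C / cb$i\<bar> \<le> \<bar>C\<bar> / lo^2 * \<bar>ca$i - cb$i\<bar>"
      using inv_lip[of lo "ca$i" "cb$i" C] lo rca rcb by auto
    have "Fx C A M ca $ i - Fx C A M cb $ i = (C / ca$i - C / cb$i) - A / (N - 1) * (alpha ca i * Sm ca i - alpha cb i * Sm cb i)"
      unfolding Fx_def N_def by (simp add: algebra_simps)
    then have "\<bar>Fx C A M ca $ i - Fx C A M cb $ i\<bar> \<le> \<bar>C / ca$i - C / cb$i\<bar> + A / (N - 1) * \<bar>alpha ca i * Sm ca i - alpha cb i * Sm cb i\<bar>"
    proof -
      have gen: "\<bar>x - K * y\<bar> \<le> \<bar>x\<bar> + K * \<bar>y\<bar>" if "K \<ge> 0" for x y K :: real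
        using that abs_triangle_ineq4[of x "K*y"] by (simp add: abs_mult)
      have "A / (N - 1) \<ge> 0" using A N1 by simp
      from gen[OF this] show ?thesis by (simp only: \<open>Fx C A M ca $ i - Fx C A M cb $ i = _\<close>)
    qed
    also have "\<dots> \<le> \<bar>C\<bar> / lo^2 * norm (a - b) + A / (N - 1) * (2 * (N - 1) * ((N - 1) * norm (a - b)))"
    proof (rule add_mono)
      show "\<bar>C / ca$i - C / cb$i\<bar> \<le> \<bar>C\<bar> / lo^2 * norm (a - b)"
        using inv dk[of i] by (meson order_trans mult_left_mono divide_nonneg_nonneg abs_ge_zero zero_le_power2)
      show "A / (N - 1) * \<bar>alpha ca i * Sm ca i - alpha cb i * Sm cb i\<bar> \<le> A / (N - 1) * (2 * (N - 1) * ((N - 1) * norm (a - b)))"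
        using G sk A N1 by (intro mult_left_mono) (auto intro: order_trans mult_left_mono)
    qed
    also have "\<dots> = K * norm (a - b)" unfolding K_def using N1 by (simp add: field_simps)
    finally show ?thesis unfolding ca_def cb_def .
  qed
  show ?thesis
  proof (intro exI[of _ "N * K"] conjI allI)
    show "0 \<le> N * K" using N1 K0 by simp
    fix a b :: "real^'n"
    have "norm (Fx C A M (clampv lo hi a) - Fx C A M (clampv lo hi b))
        \<le> (\<Sum>i\<in>UNIV. \<bar>(Fx C A M (clampv lo hi a) - Fx C A M (clampv lo hi b)) $ i\<bar>)"
      by (rule norm_le_l1_cart)
    also have "\<dots> \<le> real (card (UNIV::'n set)) * (K * norm (a - b))"
      by (rule sum_bounded_above) (use comp in simp)
    finally show "norm (Fx C A M (clampv lo hi a) - Fx C A M (clampv lo hi b)) \<le> N * K * norm (a - b)"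
      unfolding N_def by (simp add: mult.assoc)
  qed
qed




primrec pic :: "('a::euclidean_space \<Rightarrow> 'a) \<Rightarrow> 'a \<Rightarrow> nat \<Rightarrow> real \<Rightarrow> 'a" where
  "pic H y 0 = (\<lambda>t. y)"
| "pic H y (Suc k) = (\<lambda>t. y + integral {0..t} (\<lambda>s. H (pic H y k s)))"

lemma powint:
  fixes t :: real
  assumes "0 \<le> t"
  shows "((\<lambda>s. s ^ n) has_integral (t ^ Suc n / real (Suc n))) {0..t}"
proof -
  have "((\<lambda>s. s ^ n) has_integral ((\<lambda>s. s ^ Suc n / real (Suc n)) t - (\<lambda>s. s ^ Suc n / real (Suc n)) 0)) {0..t}"
  proof (rule fundamental_theorem_of_calculus[OF assms, of "\<lambda>s. s ^ Suc n / real (Suc n)" "\<lambda>s. s ^ n"])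
    fix x assume "x \<in> {0..t}"
    have "((\<lambda>s. s ^ Suc n) has_real_derivative real (Suc n) * x ^ n) (at x within {0..t})"
      using DERIV_pow[of "Suc n" x "{0..t}"] by simp
    then have "((\<lambda>s. s ^ Suc n / real (Suc n)) has_real_derivative (real (Suc n) * x ^ n / real (Suc n))) (at x within {0..t})"
      by (rule DERIV_cdivide)
    then show "((\<lambda>s. s ^ Suc n / real (Suc n)) has_vector_derivative x ^ n) (at x within {0..t})"
      by (simp add: has_real_derivative_iff_has_vector_derivative)
  qed
  then show ?thesis by simp
qed

lemma picard_exists:
  fixes H :: "'a::euclidean_space \<Rightarrow> 'a"
  assumes lip: "\<And>a b. norm (H a - H b) \<le> L * norm (a - b)" and L: "0 \<le> L"
  shows "\<exists>x. x 0 = y \<and> (\<forall>t\<ge>0. (x has_vector_derivative H (x t)) (at t within {0..}))"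
proof -
  have Hc: "continuous_on UNIV H"
    by (rule lipschitz_on_continuous_on[of L]) (use lip L in \<open>auto intro!: lipschitz_onI simp: dist_norm\<close>)
  define P where "P = pic H y"
  have P0: "P 0 = (\<lambda>t. y)" and PS: "\<And>k. P (Suc k) = (\<lambda>t. y + integral {0..t} (\<lambda>s. H (P k s)))"
    by (simp_all add: P_def)
  have cont: "continuous_on {0..T} (P k)" for k T
  proof (induction k)
    case 0 show ?case by (simp add: P0)
  next
    case (Suc k)
    have "continuous_on {0..T} (\<lambda>s. H (P k s))" using continuous_on_compose2[OF Hc Suc.IH] by auto
    then have "(\<lambda>s. H (P k s)) integrable_on {0..T}" by (rule integrable_continuous_interval)
    then have "continuous_on {0..T} (\<lambda>t. integral {0..t} (\<lambda>s. H (P k s)))" by (rule indefinite_integral_continuous_1)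
    then show ?case unfolding PS by (intro continuous_on_add continuous_on_const)
  qed
  have HPc: "continuous_on {0..T} (\<lambda>s. H (P k s))" for k T using continuous_on_compose2[OF Hc cont] by auto
  have HPi: "(\<lambda>s. H (P k s)) integrable_on {0..T}" for k T using HPc by (rule integrable_continuous_interval)
  define B where "B = norm (H y)"
  have B0: "0 \<le> B" unfolding B_def by simp
  have bound: "norm (P (Suc k) t - P k t) \<le> B * L^k * t^(Suc k) / fact (Suc k)" if "0 \<le> t" for k t
    using that
  proof (induction k arbitrary: t)
    case 0
    have "P (Suc 0) t - P 0 t = integral {0..t} (\<lambda>s. H y)" by (simp add: P0 PS)
    also have "\<dots> = t *\<^sub>R H y" using 0 by (simp add: integral_const_real)
    finally show ?case using 0 by (simp add: B_def)
  next
    case (Suc k)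
    have e1: "P (Suc (Suc k)) t = y + integral {0..t} (\<lambda>s. H (P (Suc k) s))"
      using fun_cong[OF PS[of "Suc k"], of t] by simp
    have e2: "P (Suc k) t = y + integral {0..t} (\<lambda>s. H (P k s))"
      using fun_cong[OF PS[of k], of t] by simp
    define c where "c = L * (B * L^k / fact (Suc k))"
    have "P (Suc (Suc k)) t - P (Suc k) t = integral {0..t} (\<lambda>s. H (P (Suc k) s) - H (P k s))"
      unfolding e1 e2 by (simp add: integral_diff[OF HPi HPi])
    also have "norm \<dots> \<le> integral {0..t} (\<lambda>s. c * s ^ Suc k)"
    proof (rule integral_norm_bound_integral)
      show "(\<lambda>s. H (P (Suc k) s) - H (P k s)) integrable_on {0..t}" by (intro integrable_diff HPi)
      show "(\<lambda>s. c * s ^ Suc k) integrable_on {0..t}"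
        using has_integral_mult_right[OF powint[OF Suc.prems, of "Suc k"], of c] by blast
      fix s assume s: "s \<in> {0..t}"
      have "norm (H (P (Suc k) s) - H (P k s)) \<le> L * norm (P (Suc k) s - P k s)" by (rule lip)
      also have "\<dots> \<le> L * (B * L^k * s^(Suc k) / fact (Suc k))"
        using Suc.IH[of s] s L by (intro mult_left_mono) auto
      also have "\<dots> = c * s ^ Suc k" unfolding c_def by simp
      finally show "norm (H (P (Suc k) s) - H (P k s)) \<le> c * s ^ Suc k" .
    qed
    also have "\<dots> = c * (t ^ Suc (Suc k) / real (Suc (Suc k)))"
      using has_integral_mult_right[OF powint[OF Suc.prems, of "Suc k"], of c] by (rule integral_unique)
    also have "\<dots> = B * L ^ Suc k * t ^ Suc (Suc k) / fact (Suc (Suc k))"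
      unfolding c_def by (simp add: field_simps del: of_nat_Suc)
    finally show ?case .
  qed
  define f where "f i t = P (Suc i) t - P i t" for i t
  have Psum: "P n t = y + (\<Sum>i<n. f i t)" for n t
    by (induction n) (simp_all add: f_def P0)
  define x where "x t = y + (\<Sum>i. f i t)" for t
  have ul: "uniform_limit {0..T} P x sequentially" if T: "0 \<le> T" for T
  proof -
    define Mb where "Mb i = B * L^i * T^(Suc i) / fact (Suc i)" for i
    have fb: "norm (f i t) \<le> Mb i" if "t \<in> {0..T}" for i t
    proof -
      have "norm (f i t) \<le> B * L^i * t^(Suc i) / fact (Suc i)" unfolding f_def using bound[of t i] that by simp
      also have "\<dots> \<le> Mb i" unfolding Mb_def using that B0 L
        by (intro divide_right_mono mult_left_mono power_mono) auto
      finally show ?thesis .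
    qed
    have sM: "summable Mb"
    proof (rule summable_comparison_test)
      show "summable (\<lambda>n. B * T * ((L * T) ^ n /\<^sub>R fact n))"
        by (intro summable_mult summable_exp_generic)
      show "\<exists>N. \<forall>n\<ge>N. norm (Mb n) \<le> B * T * ((L * T) ^ n /\<^sub>R fact n)"
      proof (intro exI allI impI)
        fix n :: nat
        have "Mb n = B * T * (L * T) ^ n / fact (Suc n)" unfolding Mb_def by (simp add: power_mult_distrib)
        also have "\<dots> \<le> B * T * (L * T) ^ n / fact n"
          using B0 T L by (intro divide_left_mono) (auto simp: fact_mono)
        finally show "norm (Mb n) \<le> B * T * ((L * T) ^ n /\<^sub>R fact n)"
          using B0 T L by (simp add: Mb_def divide_inverse ac_simps)
      qed
    qed
    have "uniform_limit {0..T} (\<lambda>n t. \<Sum>i<n. f i t) (\<lambda>t. \<Sum>i. f i t) sequentially"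
      by (rule Weierstrass_m_test[OF fb sM])
    then show ?thesis unfolding uniform_limit_iff x_def Psum by (simp add: dist_norm)
  qed
  have xc: "continuous_on {0..T} x" if "0 \<le> T" for T
    by (rule uniform_limit_theorem[OF _ ul[OF that]]) (auto intro: cont always_eventually)
  have xint: "x t = y + integral {0..t} (\<lambda>s. H (x s))" if t: "0 \<le> t" for t
  proof -
    have ulH: "uniform_limit {0..t} (\<lambda>n s. H (P n s)) (\<lambda>s. H (x s)) sequentially"
      unfolding uniform_limit_iff
    proof (intro allI impI)
      fix e :: real assume e: "e > 0"
      have "e / (L + 1) > 0" using e L by simp
      then have "\<forall>\<^sub>F n in sequentially. \<forall>s\<in>{0..t}. dist (P n s) (x s) < e / (L + 1)"
        using ul[OF t] unfolding uniform_limit_iff by blast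
      then show "\<forall>\<^sub>F n in sequentially. \<forall>s\<in>{0..t}. dist (H (P n s)) (H (x s)) < e"
      proof (rule eventually_mono, intro ballI)
        fix n s assume h: "\<forall>s\<in>{0..t}. dist (P n s) (x s) < e / (L + 1)" and s: "s \<in> {0..t}"
        have "dist (H (P n s)) (H (x s)) \<le> L * dist (P n s) (x s)" using lip by (simp add: dist_norm)
        also have "\<dots> \<le> L * (e / (L + 1))" using h[rule_format, OF s] L by (intro mult_left_mono) auto
        also have "\<dots> < e" using e L by (simp add: field_simps)
        finally show "dist (H (P n s)) (H (x s)) < e" .
      qed
    qed
    obtain I J where I: "\<And>n. ((\<lambda>s. H (P n s)) has_integral I n) {0..t}"
      and J: "((\<lambda>s. H (x s)) has_integral J) {0..t}" and IJ: "I \<longlonglongrightarrow> J"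
      using uniform_limit_integral[OF ulH HPc] by auto
    have PI: "P (Suc n) t = y + I n" for n
      using fun_cong[OF PS[of n], of t] integral_unique[OF I[of n]] by simp
    have "(\<lambda>n. P (Suc n) t) \<longlonglongrightarrow> y + J"
      unfolding PI by (intro tendsto_add tendsto_const IJ)
    moreover have "(\<lambda>n. P (Suc n) t) \<longlonglongrightarrow> x t"
    proof -
      have "(\<lambda>n. P n t) \<longlonglongrightarrow> x t" using tendsto_uniform_limitI[OF ul[OF t], of t] t by simp
      from LIMSEQ_Suc[OF this] show ?thesis .
    qed
    ultimately show ?thesis using LIMSEQ_unique integral_unique[OF J] by metis
  qed
  show ?thesis
  proof (intro exI conjI allI impI)
    show "x 0 = y" using xint[of 0] by simp
    fix t :: real assume t: "0 \<le> t"
    have c: "continuous_on {0..t+1} (\<lambda>s. H (x s))" using continuous_on_compose2[OF Hc xc[of "t+1"]] t by auto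
    have d1: "((\<lambda>u. integral {0..u} (\<lambda>s. H (x s))) has_vector_derivative H (x t)) (at t within {0..t+1})"
      using integral_has_vector_derivative[OF c] t by auto
    have d2: "((\<lambda>u. y + integral {0..u} (\<lambda>s. H (x s))) has_vector_derivative H (x t)) (at t within {0..t+1})"
      using has_vector_derivative_add[OF has_vector_derivative_const d1] by simp
    have d3: "(x has_vector_derivative H (x t)) (at t within {0..t+1})"
      by (rule has_vector_derivative_transform[OF _ _ d2]) (use t xint in auto)
    have "at t within {0..t+1} = at t within {0..}"
      by (rule at_within_nhd[of _ "{..<t+1}"]) auto
    then show "(x has_vector_derivative H (x t)) (at t within {0..})" using d3 by simp
  qed
qed




lemma lyap:
  fixes H :: "'a::euclidean_space \<Rightarrow> 'a" and x :: "real \<Rightarrow> 'a"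
  assumes R: "R > 0" and c: "c > 0"
    and ineq: "\<And>q. dist q p < R \<Longrightarrow> (q - p) \<bullet> H q \<le> - c * norm (q - p)^2"
    and sol: "\<forall>t\<ge>0. (x has_vector_derivative H (x t)) (at t within {0..})"
    and x0: "dist (x 0) p < R"
  shows "\<forall>t\<ge>0. dist (x t) p < R \<and> norm (x t - p)^2 \<le> exp (- (2 * c * t)) * norm (x 0 - p)^2"
proof -
  define w where "w t = (x t - p) \<bullet> (x t - p)" for t
  define Z where "Z t = exp (2 * c * t) * w t" for t
  define Z' where "Z' t = exp (2 * c * t) * (2 * c * w t + 2 * ((x t - p) \<bullet> H (x t)))" for t
  have wn: "w t = norm (x t - p)^2" for t unfolding w_def by (simp add: power2_norm_eq_inner)
  have wd: "(w has_real_derivative 2 * ((x t - p) \<bullet> H (x t))) (at t within {0..})" if t: "t \<ge> 0" for t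
  proof -
    have xd: "((\<lambda>t. x t - p) has_derivative (\<lambda>h. h *\<^sub>R H (x t))) (at t within {0..})"
      using sol t unfolding has_vector_derivative_def by (auto intro!: derivative_eq_intros)
    have d: "(w has_derivative (\<lambda>h. (x t - p) \<bullet> (h *\<^sub>R H (x t)) + (h *\<^sub>R H (x t)) \<bullet> (x t - p))) (at t within {0..})"
      unfolding w_def by (rule has_derivative_inner[OF xd xd])
    have e: "(\<lambda>h. (x t - p) \<bullet> (h *\<^sub>R H (x t)) + (h *\<^sub>R H (x t)) \<bullet> (x t - p)) = (*) (2 * ((x t - p) \<bullet> H (x t)))"
      by (rule ext) (simp add: inner_commute algebra_simps)
    show ?thesis unfolding has_field_derivative_def using has_derivative_eq_rhs[OF d e] .
  qed
  have Zd: "(Z has_real_derivative Z' t) (at t within {0..})" if t: "t \<ge> 0" for t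
  proof -
    have ed: "((\<lambda>t. exp (2 * c * t)) has_real_derivative exp (2 * c * t) * (2 * c)) (at t within {0..})"
      by (auto intro!: derivative_eq_intros)
    have "((\<lambda>t. exp (2 * c * t) * w t) has_real_derivative
        (exp (2 * c * t) * (2 * c) * w t + 2 * ((x t - p) \<bullet> H (x t)) * exp (2 * c * t))) (at t within {0..})"
      by (rule DERIV_mult[OF ed wd[OF t]])
    then show ?thesis unfolding Z_def Z'_def by (simp add: algebra_simps)
  qed
  have Zat: "(Z has_real_derivative Z' t) (at t)" if t: "t > 0" for t
  proof -
    have "at t within {0..} = at t within UNIV"
      by (rule at_within_nhd[of _ "{0<..}"]) (use t in auto)
    then show ?thesis using Zd[of t] t by simp
  qed
  have xcont: "continuous_on {0..} x"
    unfolding continuous_on_eq_continuous_within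
    using sol has_vector_derivative_continuous by (metis atLeast_iff)
  have Zcont: "continuous_on {0..} Z"
    unfolding continuous_on_eq_continuous_within
    using Zd DERIV_continuous by (metis atLeast_iff)
  have mono: "Z t0 \<le> Z 0" if t0: "t0 \<ge> 0" and inb: "\<And>s. 0 < s \<Longrightarrow> s < t0 \<Longrightarrow> dist (x s) p < R" for t0
  proof (rule DERIV_nonpos_imp_decreasing_open[OF t0])
    fix s assume s: "0 < s" "s < t0"
    have "(x s - p) \<bullet> H (x s) \<le> - c * w s" using ineq[OF inb[OF s]] by (simp add: wn)
    then have "2 * c * w s + 2 * ((x s - p) \<bullet> H (x s)) \<le> 0" by linarith
    then have "Z' s \<le> 0" unfolding Z'_def by (simp add: mult_nonneg_nonpos)
    then show "\<exists>y. (Z has_real_derivative y) (at s) \<and> y \<le> 0" using Zat[of s] s by blast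
  next
    show "continuous_on {0..t0} Z" using Zcont by (rule continuous_on_subset) auto
  qed
  have decay: "w t \<le> exp (- (2 * c * t)) * w 0" if "Z t \<le> Z 0" for t
  proof -
    have "exp (2 * c * t) * w t \<le> w 0" using that unfolding Z_def by simp
    then have "exp (- (2 * c * t)) * (exp (2 * c * t) * w t) \<le> exp (- (2 * c * t)) * w 0"
      by (intro mult_left_mono) auto
    then show ?thesis by (simp add: exp_minus field_simps)
  qed
  define \<rho> where "\<rho> = dist (x 0) p"
  define \<rho>' where "\<rho>' = (\<rho> + R) / 2"
  have r1: "\<rho> < \<rho>'" "\<rho>' < R" unfolding \<rho>'_def using x0 \<rho>_def by auto
  have inball: "\<forall>t\<ge>0. dist (x t) p < \<rho>'"
  proof (rule ccontr)
    assume neg: "\<not> (\<forall>t\<ge>0. dist (x t) p < \<rho>')"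
    define S where "S = {t. 0 \<le> t \<and> \<rho>' \<le> dist (x t) p}"
    have Sne: "S \<noteq> {}" using neg unfolding S_def by (auto simp: not_less)
    have Sbdd: "bdd_below S" unfolding S_def by (auto intro: bdd_belowI[of _ 0])
    have "continuous_on {0..} (\<lambda>t. dist (x t) p)" using xcont by (intro continuous_intros)
    then have "closed ({0..} \<inter> (\<lambda>t. dist (x t) p) -` {\<rho>'..})"
      by (rule continuous_closed_preimage) auto
    moreover have "{0..} \<inter> (\<lambda>t. dist (x t) p) -` {\<rho>'..} = S" unfolding S_def by auto
    ultimately have Scl: "closed S" by simp
    define t0 where "t0 = Inf S"
    have t0S: "t0 \<in> S" unfolding t0_def by (rule closed_contains_Inf[OF Sne Sbdd Scl])
    have t00: "t0 \<ge> 0" using t0S unfolding S_def by auto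
    have before: "dist (x s) p < \<rho>'" if "0 \<le> s" "s < t0" for s
    proof (rule ccontr)
      assume "\<not> dist (x s) p < \<rho>'"
      then have "s \<in> S" unfolding S_def using that by auto
      then have "t0 \<le> s" unfolding t0_def using Sbdd by (rule cInf_lower)
      then show False using that by simp
    qed
    have "Z t0 \<le> Z 0"
    proof (rule mono[OF t00])
      fix s :: real assume "0 < s" "s < t0"
      then show "dist (x s) p < R" using before[of s] r1 by linarith
    qed
    then have "w t0 \<le> exp (- (2 * c * t0)) * w 0" by (rule decay)
    also have "\<dots> \<le> w 0"
    proof -
      have "exp (- (2 * c * t0)) \<le> 1" using c t00 by simp
      moreover have "w 0 \<ge> 0" by (simp add: wn)
      ultimately show ?thesis by (simp add: mult_left_le_one_le)
    qed
    finally have "dist (x t0) p \<le> \<rho>" unfolding \<rho>_def wn dist_norm by (simp add: power_mono_iff)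
    then show False using t0S r1 unfolding S_def by auto
  qed
  show ?thesis
  proof (intro allI impI conjI)
    fix t :: real assume t: "t \<ge> 0"
    have "dist (x t) p < \<rho>'" using inball t by simp
    then show "dist (x t) p < R" using r1 by linarith
    have "Z t \<le> Z 0"
    proof (rule mono[OF t])
      fix s :: real assume "0 < s" "s < t"
      then have "dist (x s) p < \<rho>'" using inball by simp
      then show "dist (x s) p < R" using r1 by linarith
    qed
    from decay[OF this] show "norm (x t - p)^2 \<le> exp (- (2 * c * t)) * norm (x 0 - p)^2"
      by (simp add: wn)
  qed
qed




lemma exp_decay_lim: "(c::real) > 0 \<Longrightarrow> ((\<lambda>t. exp (- (c * t)) * d) \<longlongrightarrow> 0) at_top"
proof -
  assume c: "c > 0"
  have "filterlim (\<lambda>t. c * t) at_top at_top"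
    by (rule filterlim_tendsto_pos_mult_at_top[OF tendsto_const c filterlim_ident])
  then have "filterlim (\<lambda>t. exp (c * t)) at_top at_top"
    by (rule filterlim_compose[OF exp_at_top])
  then have "((\<lambda>t. inverse (exp (c * t))) \<longlongrightarrow> 0) at_top"
    by (rule tendsto_inverse_0_at_top)
  then have "((\<lambda>t. exp (- (c * t))) \<longlongrightarrow> 0) at_top" by (simp add: exp_minus)
  then show ?thesis by (rule tendsto_mult_left_zero)
qed

theorem proposition2:
  fixes C A M qs :: real
  assumes "CARD('n::finite) \<ge> 2"
    and "C > 0" and "M > 0" and "A \<ge> 0"
    and "0 < qs" and "qs < 1"
    and "nash C A M (\<chi> i::'n. qs)"
    and "C > 2 * (real CARD('n) - 1) * A"
  shows "loc_asym_stable (field C A M) (\<chi> i::'n. qs)"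
proof -
  note card = assms(1) and Cp = assms(2) and A0 = assms(4) and q0 = assms(5) and q1 = assms(6)
    and nash = assms(7) and big = assms(8)
  define p :: "real^'n" where "p = (\<chi> i. qs)"
  define c where "c = C - 2 * (real CARD('n) - 1) * A"
  have c0: "c > 0" unfolding c_def using big by simp
  define r where "r = min qs (1 - qs) / 2"
  have r0: "r > 0" unfolding r_def using q0 q1 by simp
  define lo where "lo = qs - r"
  define hi where "hi = qs + r"
  have lohi: "0 < lo" "lo \<le> hi" "hi < 1" unfolding lo_def hi_def r_def using q0 q1 by (auto simp: min_def field_simps)
  have pin: "\<And>k. 0 < p$k \<and> p$k < 1" unfolding p_def using q0 q1 by simp
  have F0: "Fx C A M p = 0" unfolding p_def using nash by (rule Fx_zero)
  have comp: "lo < q$k \<and> q$k < hi" if "dist q p < r" for q :: "real^'n" and k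
  proof -
    have "\<bar>(q - p)$k\<bar> \<le> norm (q - p)" by (rule component_le_norm_cart)
    then have "\<bar>q$k - qs\<bar> < r" using that unfolding p_def dist_norm by simp
    then show ?thesis unfolding lo_def hi_def by auto
  qed
  have cube: "0 < q$k \<and> q$k < 1" if "dist q p < r" for q :: "real^'n" and k
    using comp[OF that, of k] lohi by linarith
  have fieldeq: "field C A M q = Fx C A M q" if "dist q p < r" for q :: "real^'n"
    using field_eq[of q C A M] cube[OF that] by blast
  define G where "G q = Fx C A M (clampv lo hi q)" for q :: "real^'n"
  have Geq: "G q = Fx C A M q" if "dist q p < r" for q :: "real^'n"
  proof -
    have "clampv lo hi q = q" unfolding clampv_def
      using comp[OF that] by (simp add: vec_eq_iff less_imp_le)
    then show ?thesis unfolding G_def by simp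
  qed
  have key: "(q - p) \<bullet> Fx C A M q \<le> - c * norm (q - p)^2" if "dist q p < r" for q :: "real^'n"
    using key_ineq[OF card Cp A0 pin cube[OF that] F0] unfolding c_def by simp
  have ineqF: "(q - p) \<bullet> field C A M q \<le> - c * norm (q - p)^2" if "dist q p < r" for q :: "real^'n"
    using key[OF that] fieldeq[OF that] by simp
  have ineqG: "(q - p) \<bullet> G q \<le> - c * norm (q - p)^2" if "dist q p < r" for q :: "real^'n"
    using key[OF that] Geq[OF that] by simp
  obtain L where L: "L \<ge> 0" "\<And>a b. norm (G a - G b) \<le> L * norm (a - b)"
    using Fx_clamp_lip[OF lohi card A0, of C M] unfolding G_def by blast
  have lyF: "\<forall>t\<ge>0. dist (x t) p < r \<and> norm (x t - p)^2 \<le> exp (- (2 * c * t)) * norm (x 0 - p)^2"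
    if "is_solution (field C A M) x" "dist (x 0) p < r" for x
  proof -
    have "\<forall>t\<ge>0. (x has_vector_derivative field C A M (x t)) (at t within {0..})"
      using that(1) unfolding is_solution_def by blast
    from lyap[OF r0 c0 ineqF this that(2)] show ?thesis .
  qed
  have normb: "dist (x t) p \<le> exp (- (c * t)) * dist (x 0) p"
    if "is_solution (field C A M) x" "dist (x 0) p < r" "t \<ge> 0" for x t
  proof -
    have "norm (x t - p)^2 \<le> exp (- (2 * c * t)) * norm (x 0 - p)^2" using lyF[OF that(1,2)] that(3) by blast
    also have "\<dots> = (exp (- (c * t)) * norm (x 0 - p))^2"
      by (simp add: power_mult_distrib power2_eq_square exp_add[symmetric])
    finally show ?thesis unfolding dist_norm by (rule power2_le_imp_le) simp
  qed
  show ?thesis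
    unfolding loc_asym_stable_def p_def[symmetric]
  proof (intro conjI allI impI)
    show "field C A M p = 0" using fieldeq[of p] F0 r0 by simp
  next
    fix e :: real assume e: "e > 0"
    show "\<exists>\<delta>>0. \<forall>x. is_solution (field C A M) x \<and> dist (x 0) p < \<delta> \<longrightarrow> (\<forall>t\<ge>0. dist (x t) p < e)"
    proof (intro exI[of _ "min e r"] conjI allI impI)
      show "min e r > 0" using e r0 by simp
      fix x t assume h: "is_solution (field C A M) x \<and> dist (x 0) p < min e r" and t: "(t::real) \<ge> 0"
      have "dist (x t) p \<le> exp (- (c * t)) * dist (x 0) p" using normb[of x t] h t by simp
      also have "\<dots> \<le> 1 * dist (x 0) p" using c0 t by (intro mult_right_mono) auto
      also have "\<dots> < e" using h by simp
      finally show "dist (x t) p < e" .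
    qed
  next
    show "\<exists>\<delta>>0. (\<forall>y. dist y p < \<delta> \<longrightarrow> (\<exists>x. is_solution (field C A M) x \<and> x 0 = y)) \<and>
        (\<forall>x. is_solution (field C A M) x \<and> dist (x 0) p < \<delta> \<longrightarrow> (x \<longlongrightarrow> p) at_top)"
    proof (intro exI[of _ r] conjI allI impI)
      show "r > 0" by (rule r0)
    next
      fix y assume y: "dist y p < r"
      obtain x where x0: "x 0 = y" and xd: "\<forall>t\<ge>0. (x has_vector_derivative G (x t)) (at t within {0..})"
        using picard_exists[OF L(2) L(1)] by blast
      have inb: "\<forall>t\<ge>0. dist (x t) p < r \<and> norm (x t - p)^2 \<le> exp (- (2 * c * t)) * norm (x 0 - p)^2"
        using lyap[OF r0 c0 ineqG xd] y x0 by simp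
      have "is_solution (field C A M) x"
        unfolding is_solution_def
      proof (intro allI impI)
        fix t :: real assume t: "t \<ge> 0"
        have "G (x t) = field C A M (x t)" using inb t Geq fieldeq by simp
        then show "(x has_vector_derivative field C A M (x t)) (at t within {0..})" using xd t by metis
      qed
      then show "\<exists>x. is_solution (field C A M) x \<and> x 0 = y" using x0 by blast
    next
      fix x assume h: "is_solution (field C A M) x \<and> dist (x 0) p < r"
      have "((\<lambda>t. x t - p) \<longlongrightarrow> 0) at_top"
      proof (rule Lim_null_comparison)
        show "\<forall>\<^sub>F t in at_top. norm (x t - p) \<le> exp (- (c * t)) * dist (x 0) p"
          using eventually_ge_at_top[of "0::real"]
          by eventually_elim (use normb h in \<open>auto simp: dist_norm\<close>)
        show "((\<lambda>t. exp (- (c * t)) * dist (x 0) p) \<longlongrightarrow> 0) at_top" by (rule exp_decay_lim[OF c0])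
      qed
      then show "(x \<longlongrightarrow> p) at_top" by (simp add: Lim_null[symmetric])
    qed
  qed
qed


end
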